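(* Assume (F1) and (H1). Then every solution $(c,\varphi)$ of the travelling wave problem satisfies $0<\varphi(\xi)<K$ for all $\xi\in\mathbb{R}$.
   Context: Fix constants $d>0$, $\tau\geq0$, $K>0$, $f:[0,K]^2\to\mathbb{R}$ and $h:\mathbb{R}\to\mathbb{R}$ (partial derivatives of $f$ assumed to exist). (F1) $f\in C([0,K]^2,\mathbb{R})$, $f(0,0)=f(K,K)=0$, $f(u,u)>0$ for $u\in(0,K)$, $\partial_2f(u,v)\geq0$ on $[0,K]^2$. (H1) $h\ge0$, even, integrable, $\int_{\mathbb{R}}h=1$. Notation: $\Delta_1\varphi(\xi)=\varphi(\xi+1)-2\varphi(\xi)+\varphi(\xi-1)$, $(h*\varphi)(\xi)=\int_{\mathbb{R}}h(y)\varphi(\xi-y)dy$. A solution $(c,\varphi)$ of the travelling wave problem consists of $c>0$ and a differentiable $\varphi:\mathbb{R}\to\mathbb{R}$ with $-c\varphi'(\xi)+d\Delta_1\varphi(\xi)+f(\varphi(\xi),(h*\varphi)(\xi-c\tau))=0$ for all $\xi$, $\lim_{\xi\to-\infty}\varphi(\xi)=0$, $\lim_{\xi\to\infty}\varphi(\xi)=K$, and $0\le\varphi\le K$ on $\mathbb{R}$. *)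

theory Defs
  imports "HOL-Analysis.Analysis"
begin

definition conv :: "(real \<Rightarrow> real) \<Rightarrow> (real \<Rightarrow> real) \<Rightarrow> real \<Rightarrow> real" where
  "conv h \<phi> \<xi> = (LINT y|lborel. h y * \<phi> (\<xi> - y))"

definition Delta1 :: "(real \<Rightarrow> real) \<Rightarrow> real \<Rightarrow> real" where
  "Delta1 \<phi> \<xi> = \<phi> (\<xi> + 1) - 2 * \<phi> \<xi> + \<phi> (\<xi> - 1)"

definition tw_solution ::
  "real \<Rightarrow> real \<Rightarrow> real \<Rightarrow> (real \<Rightarrow> real \<Rightarrow> real) \<Rightarrow> (real \<Rightarrow> real)
     \<Rightarrow> real \<Rightarrow> (real \<Rightarrow> real) \<Rightarrow> bool" where
  "tw_solution d \<tau> K f h c \<phi> \<longleftrightarrow>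
     c > 0 \<and> (\<forall>\<xi>. \<phi> differentiable at \<xi>) \<and>
     (\<forall>\<xi>. - c * deriv \<phi> \<xi> + d * Delta1 \<phi> \<xi> + f (\<phi> \<xi>) (conv h \<phi> (\<xi> - c * \<tau>)) = 0) \<and>
     (\<phi> \<longlongrightarrow> 0) at_bot \<and> (\<phi> \<longlongrightarrow> K) at_top \<and>
     (\<forall>\<xi>. 0 \<le> \<phi> \<xi> \<and> \<phi> \<xi> \<le> K)"

end

theory Submission
  imports Defs
begin

lemma mono_f2_aux:
  fixes g :: "real \<Rightarrow> real" and K a b :: real
  assumes d2: "\<And>v. v \<in> {0..K} \<Longrightarrow>
                  \<exists>D. (g has_real_derivative D) (at v within {0..K}) \<and> D \<ge> 0"
    and ab: "0 \<le> a" "a \<le> b" "b \<le> K"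
  shows "g a \<le> g b"
proof (rule DERIV_nonneg_imp_increasing_open[OF ab(2)])
  fix x assume x: "a < x" "x < b"
  then have xi: "x \<in> interior {0..K}" using ab by auto
  from x ab obtain D where "(g has_real_derivative D) (at x within {0..K})" "D \<ge> 0"
    using d2[of x] by auto
  then show "\<exists>y. DERIV g x :> y \<and> y \<ge> 0"
    using at_within_interior[OF xi] by metis
next
  show "continuous_on {a..b} g"
  proof (rule continuous_on_subset[of "{0..K}"])
    show "continuous_on {0..K} g"
      unfolding continuous_on_eq_continuous_within
    proof
      fix x assume "x \<in> {0..K}"
      then obtain D where "(g has_real_derivative D) (at x within {0..K})" using d2 by blast
      then show "continuous (at x within {0..K}) g"
        by (rule DERIV_continuous)
    qed
  qed (use ab in auto)
qed

lemma conv_bounds: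
  fixes h \<phi> :: "real \<Rightarrow> real" and K :: real
  assumes hn: "\<And>x. h x \<ge> 0" and hi: "integrable lborel h" and h1: "(LINT x|lborel. h x) = 1"
    and b: "\<And>x. 0 \<le> \<phi> x \<and> \<phi> x \<le> K" and K: "K > 0"
  shows "0 \<le> conv h \<phi> x \<and> conv h \<phi> x \<le> K"
proof
  show "0 \<le> conv h \<phi> x" unfolding conv_def
    by (rule integral_nonneg_AE) (use hn b in \<open>auto intro!: mult_nonneg_nonneg\<close>)
  show "conv h \<phi> x \<le> K"
  proof (cases "integrable lborel (\<lambda>y. h y * \<phi> (x - y))")
    case True
    have "conv h \<phi> x \<le> (LINT y|lborel. K * h y)" unfolding conv_def
      apply (rule integral_mono[OF True])
      using hi hn apply auto[1]
      by (metis b mult.commute mult_left_mono hn)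
    also have "\<dots> = K" using h1 by simp
    finally show ?thesis .
  next
    case False
    then show ?thesis unfolding conv_def using not_integrable_integral_eq[OF False] K by simp
  qed
qed

theorem lemma3p1:
  fixes d \<tau> K :: real and f :: "real \<Rightarrow> real \<Rightarrow> real" and h :: "real \<Rightarrow> real"
    and c :: real and \<phi> :: "real \<Rightarrow> real"
  assumes d: "d > 0" and tau: "\<tau> \<ge> 0" and K: "K > 0"
    and F1_cont: "continuous_on ({0..K} \<times> {0..K}) (\<lambda>(u, v). f u v)"
    and F1_0: "f 0 0 = 0" and F1_K: "f K K = 0"
    and F1_pos: "\<And>u. 0 < u \<Longrightarrow> u < K \<Longrightarrow> f u u > 0"
    and F1_d1: "\<And>u v. u \<in> {0..K} \<Longrightarrow> v \<in> {0..K} \<Longrightarrow>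
                  \<exists>D. ((\<lambda>x. f x v) has_real_derivative D) (at u within {0..K})"
    and F1_d2: "\<And>u v. u \<in> {0..K} \<Longrightarrow> v \<in> {0..K} \<Longrightarrow>
                  \<exists>D. ((\<lambda>y. f u y) has_real_derivative D) (at v within {0..K}) \<and> D \<ge> 0"
    and H1_nonneg: "\<And>x. h x \<ge> 0" and H1_even: "\<And>x. h (- x) = h x"
    and H1_int: "integrable lborel h" and H1_one: "(LINT x|lborel. h x) = 1"
    and sol: "tw_solution d \<tau> K f h c \<phi>"
  shows "\<forall>\<xi>. 0 < \<phi> \<xi> \<and> \<phi> \<xi> < K"
proof -
  from sol have c: "c > 0" and diff: "\<And>\<xi>. \<phi> differentiable at \<xi>"
    and eq: "\<And>\<xi>. - c * deriv \<phi> \<xi> + d * Delta1 \<phi> \<xi> + f (\<phi> \<xi>) (conv h \<phi> (\<xi> - c * \<tau>)) = 0"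
    and lbot: "(\<phi> \<longlongrightarrow> 0) at_bot" and ltop: "(\<phi> \<longlongrightarrow> K) at_top"
    and b: "\<And>\<xi>. 0 \<le> \<phi> \<xi> \<and> \<phi> \<xi> \<le> K"
    unfolding tw_solution_def by blast+
  have cb: "\<And>x. 0 \<le> conv h \<phi> x \<and> conv h \<phi> x \<le> K"
    by (rule conv_bounds[OF H1_nonneg H1_int H1_one _ K]) (use b in blast)
  have mono: "\<And>u a b. u \<in> {0..K} \<Longrightarrow> 0 \<le> a \<Longrightarrow> a \<le> b \<Longrightarrow> b \<le> K \<Longrightarrow> f u a \<le> f u b"
    by (rule mono_f2_aux[where K=K]) (use F1_d2 in auto)
  have dz_min: "deriv \<phi> x = 0" if "\<phi> x = 0" for x
    proof (rule DERIV_local_min[where f=\<phi> and x=x and l="deriv \<phi> x" and d=1])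
    show "DERIV \<phi> x :> deriv \<phi> x" using diff DERIV_deriv_iff_real_differentiable by blast
  qed (use that b in auto)
  have dz_max: "deriv \<phi> x = 0" if "\<phi> x = K" for x
    proof (rule DERIV_local_max[where f=\<phi> and x=x and l="deriv \<phi> x" and d=1])
    show "DERIV \<phi> x :> deriv \<phi> x" using diff DERIV_deriv_iff_real_differentiable by blast
  qed (use that b in auto)
  have step0: "\<phi> (x + 1) = 0" if "\<phi> x = 0" for x
  proof -
    have "f 0 0 \<le> f 0 (conv h \<phi> (x - c * \<tau>))" using mono[of 0 0] cb K by auto
    then have fnn: "0 \<le> f (\<phi> x) (conv h \<phi> (x - c * \<tau>))" using that F1_0 by simp
    have "d * (\<phi> (x + 1) + \<phi> (x - 1)) + f (\<phi> x) (conv h \<phi> (x - c * \<tau>)) = 0"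
      using eq[of x] dz_min[OF that] that unfolding Delta1_def by simp
    moreover have "0 \<le> d * \<phi> (x - 1)" using d b by simp
    moreover have "0 \<le> d * \<phi> (x + 1)" using d b by simp
    ultimately have "d * \<phi> (x + 1) = 0" using fnn distrib_left[of d "\<phi> (x + 1)" "\<phi> (x - 1)"] by linarith
    then show ?thesis using d by simp
  qed
  have stepK: "\<phi> (x - 1) = K" if "\<phi> x = K" for x
  proof -
    have "f K (conv h \<phi> (x - c * \<tau>)) \<le> f K K" using mono[of K] cb K by auto
    then have fnp: "f (\<phi> x) (conv h \<phi> (x - c * \<tau>)) \<le> 0" using that F1_K by simp
    have "d * (\<phi> (x + 1) - K + (\<phi> (x - 1) - K)) + f (\<phi> x) (conv h \<phi> (x - c * \<tau>)) = 0"
      using eq[of x] dz_max[OF that] that unfolding Delta1_def by (simp add: algebra_simps)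
    moreover have "d * (\<phi> (x - 1) - K) \<le> 0" using d b by (simp add: mult_nonneg_nonpos)
    moreover have "d * (\<phi> (x + 1) - K) \<le> 0" using d b by (simp add: mult_nonneg_nonpos)
    ultimately have "d * (\<phi> (x - 1) - K) = 0" using fnp distrib_left[of d "\<phi> (x + 1) - K" "\<phi> (x - 1) - K"] by linarith
    then show ?thesis using d by simp
  qed
  show ?thesis
  proof (intro allI conjI)
    fix \<xi>
    show "0 < \<phi> \<xi>"
    proof (rule ccontr)
      assume "\<not> 0 < \<phi> \<xi>"
      then have z: "\<phi> \<xi> = 0" using b[of \<xi>] by auto
      have all: "\<phi> (\<xi> + real n) = 0" for n :: nat
      proof (induction n)
        case 0 then show ?case using z by simp
      next
        case (Suc n) then show ?case using step0[of "\<xi> + real n"] by (simp add: algebra_simps)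
      qed
      have "eventually (\<lambda>x. \<phi> x > K / 2) at_top"
        using order_tendstoD(1)[OF ltop, of "K / 2"] K by simp
      then obtain X where X: "\<And>x. x \<ge> X \<Longrightarrow> \<phi> x > K / 2"
        unfolding eventually_at_top_linorder by blast
      have "\<xi> + real (nat \<lceil>X - \<xi>\<rceil>) \<ge> X" by linarith
      from X[OF this] all K show False by simp
    qed
    show "\<phi> \<xi> < K"
    proof (rule ccontr)
      assume "\<not> \<phi> \<xi> < K"
      then have z: "\<phi> \<xi> = K" using b[of \<xi>] by auto
      have all: "\<phi> (\<xi> - real n) = K" for n :: nat
      proof (induction n)
        case 0 then show ?case using z by simp
      next
        case (Suc n) then show ?case using stepK[of "\<xi> - real n"] by (simp add: algebra_simps)
      qed
      have "eventually (\<lambda>x. \<phi> x < K / 2) at_bot"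
        using order_tendstoD(2)[OF lbot, of "K / 2"] K by simp
      then obtain X where X: "\<And>x. x \<le> X \<Longrightarrow> \<phi> x < K / 2"
        unfolding eventually_at_bot_linorder by blast
      have "\<xi> - real (nat \<lceil>\<xi> - X\<rceil>) \<le> X" by linarith
      from X[OF this] all K show False by simp
    qed
  qed
qed

end
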